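(* Let $Y$ be a fixed point combinator, and let $A_Y \equiv Y(\lambda z.\, f^\star z z)$ where $f^\star$ is a marked variable not occurring in $Y$. For every $M$ with $A_Y \twoheadrightarrow_\beta M$ there exists a balanced $N$ with $M \twoheadrightarrow_\beta N$.
   Context: Untyped $\lambda$-calculus modulo $\alpha$. A fixed point combinator is a term $Y$ with $Yx=_\beta x(Yx)$ for a variable $x$ not free in $Y$. The variable $f^\star$ marks the displayed occurrence of $f$ in $Y(\lambda z.fzz)$; its free occurrences in reducts of $A_Y$ are the descendants of that occurrence. A reduct $M$ of $A_Y$ is balanced if for every subterm of $M$ of the form $f^\star\, s\, t$ one has $s\equiv t$ (syntactic equality modulo $\alpha$). *)

theory Defs
  imports Main
begin

text \<open>Untyped lambda terms: de Bruijn indices for bound variables, names for free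
variables. Raw de Bruijn terms are alpha-equivalence classes, so HOL equality
is syntactic equality modulo alpha.\<close>

datatype lterm = Bd nat | Fr nat | App lterm lterm | Abs lterm

primrec lift :: "lterm \<Rightarrow> nat \<Rightarrow> lterm" where
  "lift (Bd i) k = (if i < k then Bd i else Bd (Suc i))"
| "lift (Fr x) k = Fr x"
| "lift (App s t) k = App (lift s k) (lift t k)"
| "lift (Abs s) k = Abs (lift s (Suc k))"

primrec subst :: "lterm \<Rightarrow> lterm \<Rightarrow> nat \<Rightarrow> lterm" where
  "subst (Bd i) s k = (if k < i then Bd (i - 1) else if i = k then s else Bd i)"
| "subst (Fr x) s k = Fr x"
| "subst (App t u) s k = App (subst t s k) (subst u s k)"
| "subst (Abs t) s k = Abs (subst t (lift s 0) (Suc k))"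

inductive beta :: "lterm \<Rightarrow> lterm \<Rightarrow> bool" where
  beta_rule: "beta (App (Abs s) t) (subst s t 0)"
| appL: "beta s t \<Longrightarrow> beta (App s u) (App t u)"
| appR: "beta s t \<Longrightarrow> beta (App u s) (App u t)"
| abs: "beta s t \<Longrightarrow> beta (Abs s) (Abs t)"

definition beta_reds :: "lterm \<Rightarrow> lterm \<Rightarrow> bool" where
  "beta_reds = beta\<^sup>*\<^sup>*"

definition beta_eq :: "lterm \<Rightarrow> lterm \<Rightarrow> bool" where
  "beta_eq = equivclp beta"

primrec fv :: "lterm \<Rightarrow> nat set" where
  "fv (Bd i) = {}"
| "fv (Fr x) = {x}"
| "fv (App s t) = fv s \<union> fv t"
| "fv (Abs s) = fv s"

primrec closed_at :: "nat \<Rightarrow> lterm \<Rightarrow> bool" where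
  "closed_at k (Bd i) = (i < k)"
| "closed_at k (Fr x) = True"
| "closed_at k (App s t) = (closed_at k s \<and> closed_at k t)"
| "closed_at k (Abs s) = closed_at (Suc k) s"

definition proper_term :: "lterm \<Rightarrow> bool" where
  "proper_term t = closed_at 0 t"

primrec subterms :: "lterm \<Rightarrow> lterm set" where
  "subterms (Bd i) = {Bd i}"
| "subterms (Fr x) = {Fr x}"
| "subterms (App s t) = insert (App s t) (subterms s \<union> subterms t)"
| "subterms (Abs s) = insert (Abs s) (subterms s)"

definition fixed_point_combinator :: "lterm \<Rightarrow> bool" where
  "fixed_point_combinator Y \<longleftrightarrow> proper_term Y \<and>
     (\<forall>x. x \<notin> fv Y \<longrightarrow> beta_eq (App Y (Fr x)) (App (Fr x) (App Y (Fr x))))"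

definition A_term :: "lterm \<Rightarrow> nat \<Rightarrow> lterm" where
  "A_term Y f = App Y (Abs (App (App (Fr f) (Bd 0)) (Bd 0)))"

definition balanced :: "nat \<Rightarrow> lterm \<Rightarrow> bool" where
  "balanced f M \<longleftrightarrow> (\<forall>s t. App (App (Fr f) s) t \<in> subterms M \<longrightarrow> s = t)"

end

theory Submission
  imports Defs
begin

declare beta.intros [intro]

lemma lift_lift:
    "i < k + 1 \<Longrightarrow> lift (lift t i) (Suc k) = lift (lift t k) i"
  by (induct t arbitrary: i k) auto

lemma lift_subst [simp]:
    "j < i + 1 \<Longrightarrow> lift (subst t s j) i = subst (lift t (i + 1)) (lift s i) j"
  by (induct t arbitrary: i j s)
    (simp_all add: diff_Suc lift_lift split: nat.split)

lemma lift_subst_lt: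
    "i < j + 1 \<Longrightarrow> lift (subst t s j) i = subst (lift t i) (lift s i) (j + 1)"
  by (induct t arbitrary: i j s) (auto simp: lift_lift)

lemma subst_lift [simp]:
    "subst (lift t k) s k = t"
  by (induct t arbitrary: k s) simp_all

lemma subst_subst:
    "i < j + 1 \<Longrightarrow> subst (subst t (lift v i) (Suc j)) (subst u v j) i = subst (subst t u i) v j"
  by (induct t arbitrary: i j u v)
    (simp_all add: diff_Suc lift_lift [symmetric] lift_subst_lt
      split: nat.split)

inductive par :: "lterm \<Rightarrow> lterm \<Rightarrow> bool" where
  pBd [simp, intro!]: "par (Bd i) (Bd i)"
| pFr [simp, intro!]: "par (Fr x) (Fr x)"
| pAbs [simp, intro!]: "par s s' \<Longrightarrow> par (Abs s) (Abs s')"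
| pApp [simp, intro!]: "par s s' \<Longrightarrow> par t t' \<Longrightarrow> par (App s t) (App s' t')"
| pBeta [simp, intro!]: "par s s' \<Longrightarrow> par t t' \<Longrightarrow> par (App (Abs s) t) (subst s' t' 0)"

inductive_cases par_cases [elim!]:
  "par (Bd i) t"
  "par (Fr x) t"
  "par (Abs s) t"
  "par (App s t) u"

lemma par_refl [simp]: "par t t"
  by (induct t) simp_all

lemma beta_par: "beta s t \<Longrightarrow> par s t"
  by (induct rule: beta.induct) auto

lemma rt_Abs: "beta\<^sup>*\<^sup>* s s' \<Longrightarrow> beta\<^sup>*\<^sup>* (Abs s) (Abs s')"
  by (induct set: rtranclp) (blast intro: rtranclp.rtrancl_into_rtrancl)+

lemma rt_AppL: "beta\<^sup>*\<^sup>* s s' \<Longrightarrow> beta\<^sup>*\<^sup>* (App s t) (App s' t)"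
  by (induct set: rtranclp) (blast intro: rtranclp.rtrancl_into_rtrancl)+

lemma rt_AppR: "beta\<^sup>*\<^sup>* t t' \<Longrightarrow> beta\<^sup>*\<^sup>* (App s t) (App s t')"
  by (induct set: rtranclp) (blast intro: rtranclp.rtrancl_into_rtrancl)+

lemma rt_App: "beta\<^sup>*\<^sup>* s s' \<Longrightarrow> beta\<^sup>*\<^sup>* t t' \<Longrightarrow> beta\<^sup>*\<^sup>* (App s t) (App s' t')"
  by (blast intro: rt_AppL rt_AppR rtranclp_trans)

lemma par_rt: "par s t \<Longrightarrow> beta\<^sup>*\<^sup>* s t"
proof (induct rule: par.induct)
  case (pBeta s s' t t')
  have "beta\<^sup>*\<^sup>* (App (Abs s) t) (App (Abs s') t')" using pBeta by (blast intro: rt_App rt_Abs)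
  then show ?case by (blast intro: rtranclp.rtrancl_into_rtrancl)
qed (auto intro: rt_App rt_Abs)

lemma par_lift [simp]: "par t t' \<Longrightarrow> par (lift t n) (lift t' n)"
  by (induct t t' arbitrary: n rule: par.induct) (auto simp: lift_subst)

lemma par_subst:
  "par t t' \<Longrightarrow> par s s' \<Longrightarrow> par (subst t s n) (subst t' s' n)"
proof (induct t t' arbitrary: s s' n rule: par.induct)
  case (pBeta a a' b b')
  have "par (App (Abs (subst a (lift s 0) (Suc n))) (subst b s n))
     (subst (subst a' (lift s' 0) (Suc n)) (subst b' s' n) 0)"
    using pBeta by auto
  then show ?case using subst_subst[of 0 n a' s' b'] by simp
qed auto

fun cd :: "lterm \<Rightarrow> lterm" where
  "cd (Bd i) = Bd i"
| "cd (Fr x) = Fr x"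
| "cd (Abs s) = Abs (cd s)"
| "cd (App (Abs s) t) = subst (cd s) (cd t) 0"
| "cd (App s t) = App (cd s) (cd t)"

lemma cd_App_nonabs: "(\<forall>u. s \<noteq> Abs u) \<Longrightarrow> cd (App s t) = App (cd s) (cd t)"
  by (cases s) auto

lemma par_cd: "par s t \<Longrightarrow> par t (cd s)"
proof (induct rule: par.induct)
  case (pApp s s' t t')
  show ?case
  proof (cases "\<exists>a. s = Abs a")
    case True
    then obtain a where a: "s = Abs a" by blast
    with pApp obtain a' where a': "s' = Abs a'" "par a a'" by auto
    with pApp a have "par a' (cd a)" by auto
    with pApp a a' show ?thesis by auto
  next
    case False
    with pApp show ?thesis by (simp add: cd_App_nonabs)
  qed
next
  case (pBeta s s' t t')
  then show ?case by (simp add: par_subst)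
qed auto


lemma rt_Abs_inv: "beta\<^sup>*\<^sup>* (Abs x) y \<Longrightarrow> \<exists>z. y = Abs z \<and> beta\<^sup>*\<^sup>* x z"
proof (induct rule: rtranclp_induct)
  case base then show ?case by auto
next
  case (step y w)
  then obtain z where z: "y = Abs z" "beta\<^sup>*\<^sup>* x z" by auto
  with step(2) obtain z' where "w = Abs z'" "beta z z'" by (auto elim: beta.cases)
  with z show ?case by (blast intro: rtranclp.rtrancl_into_rtrancl)
qed

lemma rt_subst1: "beta\<^sup>*\<^sup>* s s' \<Longrightarrow> beta\<^sup>*\<^sup>* (subst s t k) (subst s' t k)"
proof (induct rule: rtranclp_induct)
  case (step y z)
  have "par (subst y t k) (subst z t k)" using step(2) by (simp add: beta_par par_subst)
  then show ?case using step(3) by (blast intro: par_rt rtranclp_trans)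
qed auto

lemma rt_subst2: "beta\<^sup>*\<^sup>* t t' \<Longrightarrow> beta\<^sup>*\<^sup>* (subst s t k) (subst s t' k)"
proof (induct rule: rtranclp_induct)
  case (step y z)
  have "par (subst s y k) (subst s z k)" using step(2) by (simp add: beta_par par_subst)
  then show ?case using step(3) by (blast intro: par_rt rtranclp_trans)
qed auto

lemma rt_subst: "beta\<^sup>*\<^sup>* s s' \<Longrightarrow> beta\<^sup>*\<^sup>* t t' \<Longrightarrow> beta\<^sup>*\<^sup>* (subst s t k) (subst s' t' k)"
  by (blast intro: rt_subst1 rt_subst2 rtranclp_trans)

lemma cd_mono1: "par X Y \<Longrightarrow> beta\<^sup>*\<^sup>* (cd X) (cd Y)"
proof (induct rule: par.induct)
  case (pAbs s s')
  then show ?case by (simp add: rt_Abs)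
next
  case (pApp s s' t t')
  show ?case
  proof (cases "\<exists>a. s = Abs a")
    case True
    then obtain a where a: "s = Abs a" by blast
    with pApp obtain a' where a': "s' = Abs a'" "par a a'" by auto
    from pApp a a' have "beta\<^sup>*\<^sup>* (Abs (cd a)) (Abs (cd a'))" by simp
    then have "beta\<^sup>*\<^sup>* (cd a) (cd a')" using rt_Abs_inv by fastforce
    with pApp a a' show ?thesis by (simp add: rt_subst)
  next
    case False
    then have e: "cd (App s t) = App (cd s) (cd t)" by (simp add: cd_App_nonabs)
    show ?thesis
    proof (cases "\<exists>a. s' = Abs a")
      case True
      then obtain a where a: "s' = Abs a" by blast
      have "beta\<^sup>*\<^sup>* (App (cd s) (cd t)) (App (Abs (cd a)) (cd t'))"
        using pApp a by (simp add: rt_App)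
      then have "beta\<^sup>*\<^sup>* (App (cd s) (cd t)) (subst (cd a) (cd t') 0)"
        by (blast intro: rtranclp.rtrancl_into_rtrancl beta.beta_rule)
      with e a show ?thesis by simp
    next
      case False
      with e pApp show ?thesis by (simp add: cd_App_nonabs rt_App)
    qed
  qed
next
  case (pBeta s s' t t')
  have 1: "beta\<^sup>*\<^sup>* (cd (App (Abs s) t)) (subst (cd s') (cd t') 0)"
    using pBeta by (simp add: rt_subst)
  have "par (subst s' t' 0) (subst (cd s') (cd t') 0)"
    by (simp add: par_subst par_cd)
  then have "par (subst (cd s') (cd t') 0) (cd (subst s' t' 0))" by (rule par_cd)
  with 1 show ?case by (blast intro: par_rt rtranclp_trans)
qed auto

lemma cd_mono: "beta\<^sup>*\<^sup>* X Y \<Longrightarrow> beta\<^sup>*\<^sup>* (cd X) (cd Y)"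
  by (induct rule: rtranclp_induct) (auto intro: rtranclp_trans cd_mono1 beta_par)

lemma rt_cd: "beta\<^sup>*\<^sup>* X (cd X)"
  by (rule par_rt, rule par_cd, rule par_refl)

lemma rt_cdn: "beta\<^sup>*\<^sup>* X ((cd^^n) X)"
proof (induct n)
  case (Suc n)
  then show ?case using rt_cd[of "(cd^^n) X"] by (auto intro: rtranclp_trans)
qed auto

lemma cofinal: "beta\<^sup>*\<^sup>* X Y \<Longrightarrow> \<exists>n. beta\<^sup>*\<^sup>* Y ((cd^^n) X)"
proof (induct rule: rtranclp_induct)
  case base
  show ?case by (rule exI[of _ 0]) simp
next
  case (step Y Z)
  then obtain n where n: "beta\<^sup>*\<^sup>* Y ((cd^^n) X)" by blast
  have "par Z (cd Y)" using step(2) by (intro par_cd beta_par)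
  then have "beta\<^sup>*\<^sup>* Z (cd Y)" by (rule par_rt)
  moreover have "beta\<^sup>*\<^sup>* (cd Y) ((cd^^Suc n) X)" using cd_mono[OF n] by simp
  ultimately show ?case by (blast intro: rtranclp_trans)
qed


primrec ok :: "nat \<Rightarrow> lterm \<Rightarrow> bool" where
  "ok g (Bd i) = True"
| "ok g (Fr x) = (x \<noteq> g)"
| "ok g (App s t) = ((s = Fr g \<or> ok g s) \<and> ok g t)"
| "ok g (Abs s) = ok g s"

primrec hh :: "nat \<Rightarrow> nat \<Rightarrow> lterm \<Rightarrow> lterm" where
  "hh g f (Bd i) = Bd i"
| "hh g f (Fr x) = Fr x"
| "hh g f (App s t) = (if s = Fr g then App (App (Fr f) (hh g f t)) (hh g f t)
                       else App (hh g f s) (hh g f t))"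
| "hh g f (Abs s) = Abs (hh g f s)"

lemma lift_eq_Fr [simp]: "(lift s k = Fr x) = (s = Fr x)"
  by (cases s) auto

lemma ok_lift [simp]: "ok g (lift t k) = ok g t"
  by (induct t arbitrary: k) auto

lemma hh_lift: "hh g f (lift s k) = lift (hh g f s) k"
  by (induct s arbitrary: k) auto

lemma ok_subst: "ok g s \<Longrightarrow> ok g t \<Longrightarrow> ok g (subst s t k)"
  by (induct s arbitrary: t k) auto

lemma subst_eq_Fr: "ok g t \<Longrightarrow> subst s t k = Fr g \<Longrightarrow> s = Fr g"
  by (cases s) (auto split: if_splits)

lemma hh_subst: "ok g t \<Longrightarrow> hh g f (subst s t k) = subst (hh g f s) (hh g f t) k"
proof (induct s arbitrary: t k)
  case (App s1 s2)
  then show ?case using subst_eq_Fr[of g t s1 k] by auto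
qed (auto simp: hh_lift)

inductive_cases beta_Fr: "beta (Fr x) t"

lemma ok_beta: "beta s t \<Longrightarrow> ok g s \<Longrightarrow> ok g t"
proof (induct rule: beta.induct)
  case (beta_rule s t)
  then show ?case by (auto intro: ok_subst)
next
  case (appL s t u)
  then show ?case by (auto elim: beta_Fr)
qed auto

lemma ok_rt: "beta\<^sup>*\<^sup>* s t \<Longrightarrow> ok g s \<Longrightarrow> ok g t"
  by (induct rule: rtranclp_induct) (auto intro: ok_beta)

lemma fv_lift [simp]: "fv (lift s k) = fv s"
  by (induct s arbitrary: k) auto

lemma fv_subst: "fv (subst s t k) \<subseteq> fv s \<union> fv t"
proof (induct s arbitrary: t k)
  case (Abs s)
  then show ?case using Abs[of "lift t 0" "Suc k"] by simp
next
  case (App s1 s2)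
  have "fv (subst s1 t k) \<subseteq> fv s1 \<union> fv t" "fv (subst s2 t k) \<subseteq> fv s2 \<union> fv t"
    using App.hyps by blast+
  then show ?case by auto
qed auto

lemma fv_beta: "beta s t \<Longrightarrow> fv t \<subseteq> fv s"
  by (induct rule: beta.induct) (use fv_subst in fastforce)+

lemma fv_rt: "beta\<^sup>*\<^sup>* s t \<Longrightarrow> fv t \<subseteq> fv s"
  by (induct rule: rtranclp_induct) (auto dest: fv_beta)

lemma hh_Abs: "hh g f s = Abs u \<Longrightarrow> \<exists>a. s = Abs a"
  by (cases s) (auto split: if_splits)

lemma hh_cd: "ok g P \<Longrightarrow> hh g f (cd P) = cd (hh g f P)"
proof (induct P)
  case (App s t)
  have okt: "ok g t" "ok g (cd t)" using App ok_rt[OF rt_cd] by auto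
  show ?case
  proof (cases "\<exists>a. s = Abs a")
    case True
    then obtain a where a: "s = Abs a" by blast
    from App a have "Abs (hh g f (cd a)) = Abs (cd (hh g f a))" by simp
    then show ?thesis using a App okt by (simp add: hh_subst)
  next
    case False
    show ?thesis
    proof (cases "s = Fr g")
      case True
      then show ?thesis using App okt by simp
    next
      case sg: False
      then have oks: "ok g s" using App by simp
      then have "ok g (cd s)" using ok_rt[OF rt_cd] by blast
      then have "cd s \<noteq> Fr g" by auto
      moreover have "\<forall>u. hh g f s \<noteq> Abs u" using False hh_Abs by blast
      ultimately show ?thesis using False sg App okt oks
        by (simp add: cd_App_nonabs)
    qed
  qed
qed auto

lemma hh_cdn: "ok g P \<Longrightarrow> hh g f ((cd^^n) P) = (cd^^n) (hh g f P)"
proof (induct n)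
  case (Suc n)
  have "ok g ((cd^^n) P)" using Suc(2) ok_rt[OF rt_cdn] by blast
  then show ?case using Suc by (simp add: hh_cd)
qed simp

lemma hh_id: "g \<notin> fv Y \<Longrightarrow> hh g f Y = Y"
  by (induct Y) auto

lemma ok_id: "g \<notin> fv Y \<Longrightarrow> ok g Y"
  by (induct Y) auto

lemma hh_Fr: "hh g f x = Fr y \<Longrightarrow> x = Fr y"
  by (cases x) (auto split: if_splits)

lemma hh_AppFr: "hh g f x = App (Fr f) a \<Longrightarrow> f \<in> fv x"
  by (cases x) (auto split: if_splits dest: hh_Fr)

lemma hh_AppFr2: "App (Fr f) a = hh g f x \<Longrightarrow> f \<in> fv x"
  by (rule hh_AppFr[of g f x a]) (rule sym)

lemma bal_hh: "ok g Q \<Longrightarrow> f \<notin> fv Q \<Longrightarrow> App (App (Fr f) s) t \<in> subterms (hh g f Q) \<Longrightarrow> s = t"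
proof (induct Q)
  case (App s1 t1)
  show ?case
  proof (cases "s1 = Fr g")
    case True
    then show ?thesis using App by auto
  next
    case False
    then show ?thesis using App by (auto dest: hh_AppFr hh_AppFr2)
  qed
qed auto

lemma fv_finite: "finite (fv Y)"
  by (induct Y) auto

theorem lemma5p4:
  assumes "fixed_point_combinator Y"
    and "f \<notin> fv Y"
    and "beta_reds (A_term Y f) M"
  shows "\<exists>N. beta_reds M N \<and> balanced f N"
proof -
  obtain g where g: "g \<notin> insert f (fv Y)"
    using ex_new_if_finite[OF infinite_UNIV_nat] fv_finite by blast
  define P0 where "P0 = App Y (Abs (App (Fr g) (Bd 0)))"
  have "ok g Y" using g ok_id by auto
  then have okP: "ok g P0" by (simp add: P0_def)
  have "Y \<noteq> Fr g" using g by (cases Y) auto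
  then have hP: "hh g f P0 = A_term Y f" using g by (simp add: P0_def hh_id A_term_def)
  have fP: "f \<notin> fv P0" using g assms(2) by (simp add: P0_def)
  obtain n where n: "beta\<^sup>*\<^sup>* M ((cd^^n) (A_term Y f))"
    using cofinal assms(3) unfolding beta_reds_def by blast
  define Q where "Q = (cd^^n) P0"
  have "beta\<^sup>*\<^sup>* P0 Q" unfolding Q_def by (rule rt_cdn)
  then have okQ: "ok g Q" and fQ: "f \<notin> fv Q" using okP fP ok_rt fv_rt by blast+
  have "hh g f Q = (cd^^n) (A_term Y f)" unfolding Q_def using hh_cdn[OF okP] hP by simp
  then have "beta_reds M (hh g f Q)" using n by (simp add: beta_reds_def)
  moreover have "balanced f (hh g f Q)"
    unfolding balanced_def using bal_hh[OF okQ fQ] by blast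
  ultimately show ?thesis by blast
qed

end
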